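(* Let $V,W$ be subsets of normed spaces over $\mathbb{R}$ or $\mathbb{C}$, $T:V\to W$, let $\emptyset\neq C\subseteq T(V)$ be a Chebyshev set in $W$, and $P_C:W\to W$ the projection onto $C$. For $w\in W$ let $B_w=\arg\min\{\|v\|:v\in V,\ P_C(T(v))=P_C(w)\}$ and let $W'$ be the set of $w\in W$ for which this minimum is attained. (1) If $w\in W'\setminus C$ then $P_C(w)\in W'\cap C$; and any operator $S:W'\to V$ with $S(w)\in B_w$ for $w\in W'\cap C$ and $S(w)=S(P_C(w))$ for $w\in W'\setminus C$ is a pseudo-inverse of $P_C\circ T$ on $W'$. (2) If in addition $T$ is continuous, $W$ is a Hilbert space, and every closed ball in $V$ is compact, then $W'=W$.
   Context: A nonempty subset $C$ of a metric space $W$ is a Chebyshev set if every $w\in W$ has exactly one nearest point in $C$; $P_C(w)$ is that point. For subsets $V,W$ of normed spaces, $T':V\to W$ and $E\subseteq W$, an operator $S:E\to V$ is a pseudo-inverse of $T'$ on $E$ if: (BAS) for every $w\in E$, the minimum $m_w=\min_{v\in V}\|T'(v)-w\|$ is attained, the norm attains its minimum on $\{v\in V:\|T'(v)-w\|=m_w\}$, and $S(w)\in\arg\min\{\|v\|:v\in V,\ \|T'(v)-w\|=m_w\}$; and (MP2) $S(T'(S(w)))=S(w)$ for all $w\in E$. *)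

theory Defs
  imports "HOL-Analysis.Analysis"
begin

definition chebyshev :: "'a::metric_space set \<Rightarrow> 'a set \<Rightarrow> bool" where
  "chebyshev W C \<longleftrightarrow> C \<noteq> {} \<and> C \<subseteq> W \<and>
     (\<forall>w\<in>W. \<exists>!c. c \<in> C \<and> (\<forall>c'\<in>C. dist w c \<le> dist w c'))"

definition proj :: "'a::metric_space set \<Rightarrow> 'a \<Rightarrow> 'a" where
  "proj C w = (THE c. c \<in> C \<and> (\<forall>c'\<in>C. dist w c \<le> dist w c'))"

definition argmin_on :: "('a \<Rightarrow> real) \<Rightarrow> 'a set \<Rightarrow> 'a set" where
  "argmin_on f A = {x \<in> A. \<forall>y\<in>A. f x \<le> f y}"

text \<open>Pseudo-inverse S of T' : V \<rightarrow> W on E (conditions BAS and MP2).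
  For w in E, the set of v in V with norm (T' v - w) = m_w is exactly
  argmin_on (\<lambda>v. norm (T' v - w)) V.\<close>
definition pseudo_inverse ::
  "'a::real_normed_vector set \<Rightarrow> ('a \<Rightarrow> 'b::real_normed_vector) \<Rightarrow> 'b set \<Rightarrow> ('b \<Rightarrow> 'a) \<Rightarrow> bool" where
  "pseudo_inverse V T' E S \<longleftrightarrow>
     (\<forall>w\<in>E.
        argmin_on (\<lambda>v. norm (T' v - w)) V \<noteq> {} \<and>
        argmin_on norm (argmin_on (\<lambda>v. norm (T' v - w)) V) \<noteq> {} \<and>
        S w \<in> argmin_on norm (argmin_on (\<lambda>v. norm (T' v - w)) V)) \<and>
     (\<forall>w\<in>E. T' (S w) \<in> E \<and> S (T' (S w)) = S w)"

definition Bset :: "'a::real_normed_vector set \<Rightarrow> ('a \<Rightarrow> 'b::real_normed_vector) \<Rightarrow> 'b set \<Rightarrow> 'b \<Rightarrow> 'a set" where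
  "Bset V T C w = argmin_on norm {v \<in> V. proj C (T v) = proj C w}"

definition Wprime :: "'a::real_normed_vector set \<Rightarrow> ('a \<Rightarrow> 'b::real_normed_vector) \<Rightarrow> 'b set \<Rightarrow> 'b set \<Rightarrow> 'b set" where
  "Wprime V T C W = {w \<in> W. Bset V T C w \<noteq> {}}"

end

theory Submission
  imports Defs
begin

lemma proj_props:
  assumes "chebyshev W C" "w \<in> W"
  shows "proj C w \<in> C \<and> (\<forall>c'\<in>C. dist w (proj C w) \<le> dist w c')"
proof -
  from assms have "\<exists>!c. c \<in> C \<and> (\<forall>c'\<in>C. dist w c \<le> dist w c')"
    unfolding chebyshev_def by blast
  then show ?thesis unfolding proj_def by (rule theI')
qed

lemma proj_unique:
  assumes "chebyshev W C" "w \<in> W" "c \<in> C" "\<forall>c'\<in>C. dist w c \<le> dist w c'"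
  shows "proj C w = c"
proof -
  from assms have "\<exists>!c. c \<in> C \<and> (\<forall>c'\<in>C. dist w c \<le> dist w c')"
    unfolding chebyshev_def by blast
  then show ?thesis unfolding proj_def using assms(3,4) by (simp add: the1_equality)
qed

lemma proj_C:
  assumes "chebyshev W C" "c \<in> C"
  shows "proj C c = c"
  using assms proj_unique[OF assms(1) _ assms(2)] unfolding chebyshev_def by auto

lemma part1:
  fixes V :: "'a::real_normed_vector set" and W :: "'b::real_normed_vector set"
  assumes TV: "T ` V \<subseteq> W" and CT: "C \<subseteq> T ` V" and ch: "chebyshev W C"
  shows "(\<forall>w \<in> Wprime V T C W - C. proj C w \<in> Wprime V T C W \<inter> C) \<and>
        (\<forall>S::'b \<Rightarrow> 'a.
            (\<forall>w \<in> Wprime V T C W \<inter> C. S w \<in> Bset V T C w) \<and>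
            (\<forall>w \<in> Wprime V T C W - C. S w = S (proj C w))
          \<longrightarrow> pseudo_inverse V (proj C \<circ> T) (Wprime V T C W) S)"
proof -
  have CW: "C \<subseteq> W" using ch unfolding chebyshev_def by auto
  have PP: "proj C (proj C w) = proj C w" if "w \<in> W" for w
    using proj_C[OF ch] proj_props[OF ch that] by auto
  have PC: "proj C w \<in> C" if "w \<in> W" for w using proj_props[OF ch that] by auto
  have Beq: "Bset V T C (proj C w) = Bset V T C w" if "w \<in> W" for w
    unfolding Bset_def using PP[OF that] by simp
  have WP: "proj C w \<in> Wprime V T C W" if "w \<in> Wprime V T C W" for w
    using that Beq PC CW unfolding Wprime_def by auto
  have A1: "\<forall>w \<in> Wprime V T C W - C. proj C w \<in> Wprime V T C W \<inter> C"
    using WP PC unfolding Wprime_def by auto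
  have AM: "argmin_on (\<lambda>v. norm ((proj C \<circ> T) v - w)) V = {v\<in>V. proj C (T v) = proj C w}"
    if w: "w \<in> W" for w
  proof -
    have "proj C w \<in> T ` V" using CT PC[OF w] by (rule subsetD)
    then obtain v0 where v0: "v0 \<in> V" "T v0 = proj C w" by (rule imageE) simp
    have pv0: "proj C (T v0) = proj C w" unfolding v0(2) by (rule PP[OF w])
    have low: "norm (proj C (T v) - w) \<ge> norm (proj C w - w)" if "v \<in> V" for v
    proof -
      have "proj C (T v) \<in> C" using PC TV that by auto
      then have "dist w (proj C w) \<le> dist w (proj C (T v))" using proj_props[OF ch w] by blast
      then show ?thesis by (simp add: dist_norm norm_minus_commute)
    qed
    show ?thesis
    proof (intro set_eqI iffI)
      fix v assume "v \<in> argmin_on (\<lambda>v. norm ((proj C \<circ> T) v - w)) V"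
      then have v: "v \<in> V" "norm (proj C (T v) - w) \<le> norm (proj C (T v0) - w)"
        unfolding argmin_on_def using v0 by auto
      have Tv: "proj C (T v) \<in> C" using PC TV v by auto
      have "\<forall>c'\<in>C. dist w (proj C (T v)) \<le> dist w c'"
        using v pv0 proj_props[OF ch w] by (auto simp: dist_norm norm_minus_commute)
      then have "proj C w = proj C (T v)" using proj_unique[OF ch w Tv] by simp
      then show "v \<in> {v\<in>V. proj C (T v) = proj C w}" using v by simp
    next
      fix v assume "v \<in> {v\<in>V. proj C (T v) = proj C w}"
      then show "v \<in> argmin_on (\<lambda>v. norm ((proj C \<circ> T) v - w)) V"
        unfolding argmin_on_def using low by auto
    qed
  qed
  have A2: "pseudo_inverse V (proj C \<circ> T) (Wprime V T C W) S"
    if h1: "\<forall>w \<in> Wprime V T C W \<inter> C. S w \<in> Bset V T C w"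
      and h2: "\<forall>w \<in> Wprime V T C W - C. S w = S (proj C w)" for S
  proof -
    have SB: "S w \<in> Bset V T C w" if w: "w \<in> Wprime V T C W" for w
    proof (cases "w \<in> C")
      case True then show ?thesis using h1 w by auto
    next
      case False
      then have "S w = S (proj C w)" using h2 w by auto
      moreover have "S (proj C w) \<in> Bset V T C (proj C w)" using h1 WP[OF w] PC w
        unfolding Wprime_def by auto
      ultimately show ?thesis using Beq w unfolding Wprime_def by auto
    qed
    show ?thesis unfolding pseudo_inverse_def
    proof (intro conjI ballI)
      fix w assume w: "w \<in> Wprime V T C W"
      then have wW: "w \<in> W" unfolding Wprime_def by auto
      have "proj C w \<in> T ` V" using CT PC[OF wW] by (rule subsetD)
      then obtain v0 where v0: "v0 \<in> V" "T v0 = proj C w" by (rule imageE) simp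
      have pv0: "proj C (T v0) = proj C w" unfolding v0(2) by (rule PP[OF wW])
      show "argmin_on (\<lambda>v. norm ((proj C \<circ> T) v - w)) V \<noteq> {}"
        using AM[OF wW] v0 pv0 by auto
      show "S w \<in> argmin_on norm (argmin_on (\<lambda>v. norm ((proj C \<circ> T) v - w)) V)"
        using SB[OF w] AM[OF wW] unfolding Bset_def by simp
      then show "argmin_on norm (argmin_on (\<lambda>v. norm ((proj C \<circ> T) v - w)) V) \<noteq> {}"
        by auto
      have Sw: "S w \<in> V" "proj C (T (S w)) = proj C w"
        using SB[OF w] unfolding Bset_def argmin_on_def by auto
      show "(proj C \<circ> T) (S w) \<in> Wprime V T C W" using Sw WP[OF w] by simp
      show "S ((proj C \<circ> T) (S w)) = S w"
      proof (cases "w \<in> C")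
        case True then show ?thesis using Sw proj_C[OF ch True] by simp
      next
        case False then show ?thesis using Sw h2 w by simp
      qed
    qed
  qed
  show ?thesis using A1 A2 by blast
qed

lemma part2:
  fixes V :: "'c::real_normed_vector set" and W :: "'d::real_normed_vector set"
  assumes TV: "T ` V \<subseteq> W" and CT: "C \<subseteq> T ` V" and ch: "chebyshev W C"
    and cT: "continuous_on V T" and cpt: "\<forall>x\<in>V. \<forall>r. compact (cball x r \<inter> V)"
  shows "Wprime V T C W = W"
proof (intro set_eqI iffI)
  fix w assume "w \<in> Wprime V T C W" then show "w \<in> W" unfolding Wprime_def by auto
next
  fix w assume wW: "w \<in> W"
  have PC: "proj C x \<in> C" if "x \<in> W" for x using proj_props[OF ch that] by auto
  have PP: "proj C (proj C w) = proj C w"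
    using proj_C[OF ch] proj_props[OF ch wW] by auto
  have "proj C w \<in> T ` V" using CT PC[OF wW] by (rule subsetD)
  then obtain v0 where v0: "v0 \<in> V" "T v0 = proj C w" by (rule imageE) simp
  have pv0: "proj C (T v0) = proj C w" unfolding v0(2) by (rule PP)
  define c where "c = proj C w"
  have cC: "c \<in> C" using PC[OF wW] c_def by simp
  define F where "F = (\<Inter>c'\<in>C. {x. dist x c \<le> dist x c'})"
  have cl1: "closed {x. dist x c \<le> dist x c'}" for c'
    by (rule closed_Collect_le) (intro continuous_on_dist continuous_on_id continuous_on_const)+
  have clF: "closed F" unfolding F_def using cl1 by blast
  have eqF: "proj C (T v) = c \<longleftrightarrow> T v \<in> F" if v: "v \<in> V" for v
  proof -
    have TvW: "T v \<in> W" using TV v by auto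
    show ?thesis
    proof
      assume h: "proj C (T v) = c"
      have "\<forall>c'\<in>C. dist (T v) (proj C (T v)) \<le> dist (T v) c'"
        using proj_props[OF ch TvW] by blast
      then show "T v \<in> F" unfolding F_def using h by simp
    next
      assume "T v \<in> F"
      then have "\<forall>c'\<in>C. dist (T v) c \<le> dist (T v) c'" unfolding F_def by simp
      then show "proj C (T v) = c" by (rule proj_unique[OF ch TvW cC])
    qed
  qed
  define K where "K = cball v0 (2 * norm v0) \<inter> V"
  have cK: "compact K" using cpt v0 K_def by auto
  have clK: "closed (K \<inter> T -` F)"
  proof (rule continuous_closed_preimage)
    show "continuous_on K T" using cT K_def continuous_on_subset by blast
  qed (use cK compact_imp_closed clF in auto)
  define A where "A = (K \<inter> T -` F) \<inter> cball 0 (norm v0)"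
  have c1: "compact ((K \<inter> T -` F) \<inter> K)" by (rule closed_Int_compact[OF clK cK])
  have "(K \<inter> T -` F) \<inter> K = K \<inter> T -` F" by blast
  then have c2: "compact (K \<inter> T -` F)" using c1 by simp
  have cA: "compact A" unfolding A_def by (rule compact_Int_closed[OF c2 closed_cball])
  have "T v0 \<in> F" using eqF[OF v0(1)] pv0 c_def by simp
  then have v0A: "v0 \<in> A" unfolding A_def K_def using v0(1) by simp
  obtain m where m: "m \<in> A" "\<forall>y\<in>A. norm m \<le> norm y"
    using continuous_attains_inf[OF cA _ continuous_on_norm_id] v0A by blast
  have mS: "m \<in> {v \<in> V. proj C (T v) = proj C w}"
    using m(1) eqF c_def unfolding A_def K_def by auto
  have "\<forall>y\<in>{v \<in> V. proj C (T v) = proj C w}. norm m \<le> norm y"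
  proof
    fix y assume y: "y \<in> {v \<in> V. proj C (T v) = proj C w}"
    show "norm m \<le> norm y"
    proof (cases "norm y \<le> norm v0")
      case True
      have "dist v0 y \<le> 2 * norm v0" using True norm_triangle_ineq4[of v0 y]
        by (simp add: dist_norm)
      then have "y \<in> A" using y True eqF c_def unfolding A_def K_def by auto
      then show ?thesis using m by auto
    next
      case False
      have "norm m \<le> norm v0" using m(2) v0A by blast
      then show ?thesis using False by linarith
    qed
  qed
  then have "m \<in> Bset V T C w" using mS unfolding Bset_def argmin_on_def by auto
  then show "w \<in> Wprime V T C W" using wW unfolding Wprime_def by auto
qed

theorem mainTheorem11:
  shows
  "(\<forall>(V::'a::real_normed_vector set) (W::'b::real_normed_vector set) (T::'a \<Rightarrow> 'b) C.
      T ` V \<subseteq> W \<and> C \<subseteq> T ` V \<and> chebyshev W C \<longrightarrow>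
        (\<forall>w \<in> Wprime V T C W - C. proj C w \<in> Wprime V T C W \<inter> C) \<and>
        (\<forall>S::'b \<Rightarrow> 'a.
            (\<forall>w \<in> Wprime V T C W \<inter> C. S w \<in> Bset V T C w) \<and>
            (\<forall>w \<in> Wprime V T C W - C. S w = S (proj C w))
          \<longrightarrow> pseudo_inverse V (proj C \<circ> T) (Wprime V T C W) S))
   \<and>
   (\<forall>(V::'c::real_normed_vector set) (W::'d::{real_inner,complete_space} set) (T::'c \<Rightarrow> 'd) C.
      T ` V \<subseteq> W \<and> C \<subseteq> T ` V \<and> chebyshev W C \<and>
      continuous_on V T \<and> subspace W \<and> closed W \<and>
      (\<forall>x\<in>V. \<forall>r. compact (cball x r \<inter> V))
      \<longrightarrow> Wprime V T C W = W)"
  apply (rule conjI)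
  subgoal
    apply (intro allI impI)
    apply (rule part1)
      apply auto
    done
  subgoal
    apply (intro allI impI)
    apply (rule part2)
        apply auto
    done
  done

end
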